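(* Let $\sigma=1^a21^b$ with $a\ge1$, $b\ge0$, and let $k=a+b+1$. Let $T$ be a set of patterns and $T'=\{1(\tau+1):\tau\in T\}$. For a set of patterns $R$ let $f_n(\sigma,R)$ be the number of partitions of $[n]$ avoiding $\sigma$ and every pattern in $R$. Then for every $n\ge1$, \[f_n(\sigma,T')=\sum_{i=1}^{k-2}f_{n-i}(\sigma,T)\binom{n-1}{i-1}+\sum_{i=k-1}^{n}f_{n-i}(\sigma,T)\binom{n-i+k-3}{k-3},\] where $f_m=0$ for $m<0$, and binomial coefficients $\binom{m}{-1}$ (arising only when $k=2$) are interpreted as $1$ if $m=-1$ and $0$ if $m\ge0$.
   Context: Set partitions are written in canonical sequential form (restricted growth words). Pattern containment means having a subsequence order-isomorphic to the pattern. For a word $\tau$, $\tau+1$ adds $1$ to every letter, so $1(\tau+1)$ is the pattern obtained by prefixing a new smallest block containing only the first element; $1^a$ denotes $a$ copies of $1$. *)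

theory Defs
  imports Main
begin

(* Restricted growth words (canonical sequential form), letters starting at 1:
   first letter is 1, each letter is at most 1 + the maximum of the previous letters. *)
fun rgw_aux :: "nat \<Rightarrow> nat list \<Rightarrow> bool" where
  "rgw_aux m [] = True"
| "rgw_aux m (x # xs) = (1 \<le> x \<and> x \<le> m + 1 \<and> rgw_aux (max m x) xs)"

definition rgw :: "nat list \<Rightarrow> bool" where
  "rgw w = rgw_aux 0 w"

definition order_iso :: "nat list \<Rightarrow> nat list \<Rightarrow> bool" where
  "order_iso u v \<longleftrightarrow> length u = length v \<and>
     (\<forall>i<length u. \<forall>j<length u. (u ! i < u ! j \<longleftrightarrow> v ! i < v ! j))"

definition contains :: "nat list \<Rightarrow> nat list \<Rightarrow> bool" where
  "contains w p \<longleftrightarrow> (\<exists>I. order_iso (nths w I) p)"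

definition avoids :: "nat list \<Rightarrow> nat list \<Rightarrow> bool" where
  "avoids w p \<longleftrightarrow> \<not> contains w p"

definition fcount :: "nat list \<Rightarrow> nat list set \<Rightarrow> int \<Rightarrow> int" where
  "fcount \<sigma> R m = (if m < 0 then 0 else
     int (card {w. rgw w \<and> length w = nat m \<and> avoids w \<sigma> \<and> (\<forall>\<tau>\<in>R. avoids w \<tau>)}))"

definition gbinom :: "int \<Rightarrow> int \<Rightarrow> int" where
  "gbinom m j = (if j = -1 then (if m = -1 then 1 else 0)
                 else if m < 0 \<or> j < 0 then 0 else int (nat m choose nat j))"

definition shift1 :: "nat list \<Rightarrow> nat list" where
  "shift1 \<tau> = 1 # map Suc \<tau>"

end

theory Submission
  imports Defs "HOL-Library.Sublist"
begin

definition pat :: "nat \<Rightarrow> nat \<Rightarrow> 'a \<Rightarrow> 'a \<Rightarrow> 'a list" where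
  "pat a b x y = replicate a x @ [y] @ replicate b x"

definition cnt :: "bool list \<Rightarrow> nat" where "cnt M = length (filter id M)"

lemma cnt_simps[simp]: "cnt [] = 0" "cnt (True#M) = Suc (cnt M)" "cnt (False#M) = cnt M"
  by (auto simp: cnt_def)

lemma subseq_rep_cnt: "subseq (replicate b True) M \<longleftrightarrow> b \<le> cnt M"
proof (induction M arbitrary: b)
  case Nil then show ?case by (cases b) auto
next
  case (Cons x M)
  show ?case
  proof (cases b)
    case 0 then show ?thesis by simp
  next
    case (Suc b')
    have r: "replicate b True = True # replicate b' True" using Suc by simp
    show ?thesis
    proof (cases x)
      case True
      have "subseq (True # replicate b' True) (x # M) = subseq (replicate b' True) M" using True by simp
      then have "subseq (replicate b True) (x # M) = subseq (replicate b' True) M" by (simp only: r)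
      then show ?thesis using Cons.IH[of b'] Suc True by simp
    next
      case False
      have "subseq (True # replicate b' True) (x # M) = subseq (True # replicate b' True) M" using False by simp
      then have "subseq (replicate b True) (x # M) = subseq (replicate b True) M" by (simp only: r)
      then show ?thesis using Cons.IH[of b] False by simp
    qed
  qed
qed

lemma finite_bl: "finite {M::bool list. length M = L \<and> P M}"
proof -
  have "finite {M::bool list. set M \<subseteq> UNIV \<and> length M = L}"
    by (rule finite_lists_length_eq) simp
  then show ?thesis by (rule rev_finite_subset) auto
qed

lemma split_bl: "{M::bool list. length M = Suc L \<and> P M} =
   Cons True ` {M. length M = L \<and> P (True#M)} \<union> Cons False ` {M. length M = L \<and> P (False#M)}"
  (is "?A = ?B")
proof
  show "?A \<subseteq> ?B"
  proof
    fix M assume "M \<in> ?A"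
    then obtain x M' where "M = x # M'" "length M' = L" "P (x#M')"
      by (auto simp: length_Suc_conv)
    then show "M \<in> ?B" by (cases x) auto
  qed
qed auto

lemma card_split_bl: "card {M::bool list. length M = Suc L \<and> P M} =
   card {M. length M = L \<and> P (True#M)} + card {M. length M = L \<and> P (False#M)}"
  unfolding split_bl
  by (subst card_Un_disjoint) (auto simp: card_image finite_bl)

lemma card_cnt: "card {M. length M = L \<and> cnt M = j} = L choose j"
proof (induction L arbitrary: j)
  case 0
  have "{M::bool list. length M = 0 \<and> cnt M = j} = (if j = 0 then {[]} else {})" by auto
  then show ?case by simp
next
  case (Suc L)
  show ?case
  proof (cases j)
    case 0
    have "{M. length M = L \<and> cnt (True # M) = j} = {}" using 0 by auto
    then show ?thesis using Suc 0 by (simp add: card_split_bl)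
  next
    case (Suc j')
    have "{M. length M = L \<and> cnt (True # M) = j} = {M. length M = L \<and> cnt M = j'}" using Suc by auto
    then show ?thesis using Suc.IH Suc by (simp add: card_split_bl)
  qed
qed

definition NS :: "nat \<Rightarrow> nat \<Rightarrow> nat \<Rightarrow> nat \<Rightarrow> bool list set" where
  "NS a b L j = {M. length M = L \<and> cnt M = j \<and> \<not> subseq (pat a b True False) M}"

definition Fm :: "nat \<Rightarrow> nat \<Rightarrow> nat \<Rightarrow> nat \<Rightarrow> int" where
  "Fm a b L j = (if j < a + b then int (L choose j)
     else gbinom (int L - int j + int a + int b - 1) (int a + int b - 1))"

lemma gbinom_nn: "j \<ge> 0 \<Longrightarrow> gbinom m j = (if m < 0 then 0 else int (nat m choose nat j))"
  unfolding gbinom_def by auto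

lemma gbinom_pascal: "r \<ge> 0 \<Longrightarrow> gbinom m (r - 1) + gbinom m r = gbinom (m + 1) r"
proof -
  assume r: "r \<ge> 0"
  show ?thesis
  proof (cases "r = 0")
    case True
    have g0: "gbinom m 0 = (if m < 0 then 0 else 1)" "gbinom (m+1) 0 = (if m + 1 < 0 then 0 else 1)"
      by (simp_all add: gbinom_nn)
    have g1: "gbinom m (-1) = (if m = -1 then 1 else 0)" unfolding gbinom_def by simp
    show ?thesis unfolding True using g0 g1 by simp
  next
    case False
    then have r1: "r \<ge> 1" using r by simp
    define s where "s = nat (r - 1)"
    have s: "r = int (Suc s)" using r1 s_def by simp
    have e1: "nat (r-1) = s" "nat r = Suc s" using s by auto
    have ga: "gbinom m (r - 1) = (if m < 0 then 0 else int (nat m choose s))"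
      using gbinom_nn[of "r - 1" m] r1 e1 by simp
    have gb: "gbinom m r = (if m < 0 then 0 else int (nat m choose Suc s))"
      using gbinom_nn[of r m] r1 e1 by simp
    have gc: "gbinom (m+1) r = (if m + 1 < 0 then 0 else int (nat (m+1) choose Suc s))"
      using gbinom_nn[of r "m+1"] r1 e1 by simp
    show ?thesis
    proof (cases "m \<ge> 0")
      case True
      have "nat (m+1) = Suc (nat m)" using True by simp
      then show ?thesis using ga gb gc True by simp
    next
      case False
      then have "m + 1 < 0 \<or> m + 1 = 0" by linarith
      then show ?thesis using ga gb gc False by auto
    qed
  qed
qed

lemma Fm_lt: "j < a + b \<Longrightarrow> Fm a b L j = int (L choose j)"
  unfolding Fm_def by simp

lemma Fm_ge: "\<not> j < a + b \<Longrightarrow> Fm a b L j = gbinom (int L - int j + int a + int b - 1) (int a + int b - 1)"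
  unfolding Fm_def by simp

lemma Fm_step_pos: "Fm a' b L j' + Fm (Suc a') b L (Suc j') = Fm (Suc a') b (Suc L) (Suc j')"
proof (cases "Suc j' < Suc a' + b")
  case True
  then have "j' < a' + b" by simp
  then show ?thesis using True by (simp only: Fm_lt binomial_Suc_Suc of_nat_add)
next
  case False
  define m where "m = int L - int j' + int a' + int b - 1"
  define r where "r = int a' + int b"
  have r0: "r \<ge> 0" by (simp add: r_def)
  have f1: "\<not> j' < a' + b" using False by simp
  have e1: "int L - int j' + int a' + int b - 1 = m" "int a' + int b - 1 = r - 1" by (simp_all add: m_def r_def)
  have e2: "int L - int (Suc j') + int (Suc a') + int b - 1 = m" "int (Suc a') + int b - 1 = r" by (simp_all add: m_def r_def)
  have e3: "int (Suc L) - int (Suc j') + int (Suc a') + int b - 1 = m + 1" by (simp add: m_def)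
  have "Fm a' b L j' = gbinom m (r - 1)" using Fm_ge[OF f1] e1 by (simp only:)
  moreover have "Fm (Suc a') b L (Suc j') = gbinom m r" using Fm_ge[OF False] e2 by (simp only:)
  moreover have "Fm (Suc a') b (Suc L) (Suc j') = gbinom (m + 1) r" using Fm_ge[OF False] e2 e3 by (simp only:)
  ultimately show ?thesis using gbinom_pascal[OF r0] by (simp only:)
qed

lemma Fm_step_zero: "Fm 0 b L j' + (if Suc j' < b then int (L choose Suc j') else 0) = Fm 0 b (Suc L) (Suc j')"
proof -
  consider "Suc j' < b" | "Suc j' = b" | "Suc j' > b" by linarith
  then show ?thesis
  proof cases
    case 1
    then have "j' < 0 + b" by simp
    then show ?thesis using 1 by (simp only: Fm_lt binomial_Suc_Suc of_nat_add if_True add_0)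
  next
    case 2
    have n1: "\<not> Suc j' < 0 + b" "j' < 0 + b" using 2 by simp_all
    have "int (Suc L) - int (Suc j') + int 0 + int b - 1 = int L" "int 0 + int b - 1 = int j'" using 2 by simp_all
    then have "Fm 0 b (Suc L) (Suc j') = gbinom (int L) (int j')" using Fm_ge[OF n1(1)] by (simp only:)
    also have "\<dots> = int (L choose j')" unfolding gbinom_def by simp
    finally show ?thesis using Fm_lt[OF n1(2)] n1 by simp
  next
    case 3
    have n1: "\<not> Suc j' < 0 + b" "\<not> j' < 0 + b" using 3 by simp_all
    have "int (Suc L) - int (Suc j') + int 0 + int b - 1 = int L - int j' + int 0 + int b - 1" by simp
    then have "Fm 0 b (Suc L) (Suc j') = Fm 0 b L j'" using Fm_ge[OF n1(1)] Fm_ge[OF n1(2)] by (simp only:)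
    then show ?thesis using 3 by simp
  qed
qed

lemma card_NS: "int (card (NS a b L j)) = Fm a b L j"
proof (induction L arbitrary: a j)
  case 0
  have "NS a b 0 j = (if j = 0 then {[]} else {})" by (auto simp: NS_def pat_def)
  then show ?case by (auto simp: Fm_def gbinom_def)
next
  case (Suc L)
  have cs: "card (NS a b (Suc L) j) = card {M. length M = L \<and> cnt (True#M) = j \<and> \<not> subseq (pat a b True False) (True#M)}
     + card {M. length M = L \<and> cnt (False#M) = j \<and> \<not> subseq (pat a b True False) (False#M)}"
    unfolding NS_def by (rule card_split_bl)
  show ?case
  proof (cases a)
    case (Suc a')
    have p: "pat a b True False = True # pat a' b True False" using Suc by (simp add: pat_def)
    have e2: "{M. length M = L \<and> cnt (False#M) = j \<and> \<not> subseq (pat a b True False) (False#M)} = NS a b L j"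
      by (auto simp: NS_def p)
    show ?thesis
    proof (cases j)
      case 0
      have "{M. length M = L \<and> cnt (True#M) = j \<and> \<not> subseq (pat a b True False) (True#M)} = {}"
        using 0 by auto
      then show ?thesis using cs e2 Suc.IH[of a j] 0 \<open>a = Suc a'\<close> by (simp add: Fm_def)
    next
      case (Suc j')
      have "{M. length M = L \<and> cnt (True#M) = j \<and> \<not> subseq (pat a b True False) (True#M)} = NS a' b L j'"
        using Suc by (auto simp: NS_def p)
      then show ?thesis using cs e2 Suc.IH[of a j] Suc.IH[of a' j'] Suc \<open>a = Suc a'\<close> Fm_step_pos[of a' b L j']
        by simp
    qed
  next
    case 0
    have p: "pat a b True False = False # replicate b True" using 0 by (simp add: pat_def)
    have e2: "{M. length M = L \<and> cnt (False#M) = j \<and> \<not> subseq (pat a b True False) (False#M)} =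
       (if j < b then {M. length M = L \<and> cnt M = j} else {})"
      by (auto simp: p subseq_rep_cnt)
    have c2: "int (card {M. length M = L \<and> cnt (False#M) = j \<and> \<not> subseq (pat a b True False) (False#M)})
       = (if j < b then int (L choose j) else 0)"
      unfolding e2 by (simp add: card_cnt)
    show ?thesis
    proof (cases j)
      case 0
      have "{M. length M = L \<and> cnt (True#M) = j \<and> \<not> subseq (pat a b True False) (True#M)} = {}"
        using 0 by auto
      then show ?thesis using cs c2 0 \<open>a = 0\<close> by (simp add: Fm_def gbinom_def)
    next
      case (Suc j')
      have e1: "{M. length M = L \<and> cnt (True#M) = j \<and> \<not> subseq (pat a b True False) (True#M)} = NS 0 b L j'"
        using Suc \<open>a = 0\<close> by (auto simp: NS_def pat_def)
      have "int (card (NS a b (Suc L) j)) = int (card (NS 0 b L j')) + (if j < b then int (L choose j) else 0)"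
        using cs[unfolded e1] c2 by linarith
      also have "\<dots> = Fm 0 b L j' + (if Suc j' < b then int (L choose Suc j') else 0)"
        using Suc.IH[of 0 j'] Suc by (simp only:)
      also have "\<dots> = Fm a b (Suc L) j" using Fm_step_zero[of b L j'] Suc \<open>a = 0\<close> by (simp only:)
      finally show ?thesis .
    qed
  qed
qed

fun merge :: "bool list \<Rightarrow> nat list \<Rightarrow> nat list" where
  "merge [] v = []"
| "merge (True#m) v = 1 # merge m v"
| "merge (False#m) [] = []"
| "merge (False#m) (y#v) = Suc y # merge m v"

lemma merge_length: "length v = length (filter Not m) \<Longrightarrow> length (merge m v) = length m"
  by (induction m v rule: merge.induct) auto

lemma merge_mask: "\<forall>y\<in>set v. 1 \<le> y \<Longrightarrow> length v = length (filter Not m) \<Longrightarrow>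
   map (\<lambda>x. x = 1) (merge m v) = m"
  by (induction m v rule: merge.induct) auto

lemma merge_filter: "\<forall>y\<in>set v. 1 \<le> y \<Longrightarrow> length v = length (filter Not m) \<Longrightarrow>
   filter (\<lambda>x. x \<noteq> 1) (merge m v) = map Suc v"
  by (induction m v rule: merge.induct) auto

lemma merge_ge1: "\<forall>x\<in>set (merge m v). 1 \<le> x"
  by (induction m v rule: merge.induct) auto

lemma merge_rgw: "\<forall>y\<in>set v. 1 \<le> y \<Longrightarrow> length v = length (filter Not m) \<Longrightarrow>
   rgw_aux (Suc c) (merge m v) = rgw_aux c v"
proof (induction m v arbitrary: c rule: merge.induct)
  case (4 m y v)
  have "max (Suc c) (Suc y) = Suc (max c y)" by simp
  then show ?case using 4 by auto
qed auto

lemma merge_inv: "\<forall>x\<in>set w. 1 \<le> x \<Longrightarrow>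
  merge (map (\<lambda>x. x = 1) w) (map (\<lambda>x. x - 1) (filter (\<lambda>x. x \<noteq> 1) w)) = w"
  by (induction w) auto

lemma rgw_aux_bounds: "rgw_aux c w \<Longrightarrow> \<forall>x\<in>set w. 1 \<le> x \<and> x \<le> c + length w"
proof (induction c w rule: rgw_aux.induct)
  case (2 m x xs)
  then show ?case by fastforce
qed auto

lemma contains_subseq: "contains w p \<longleftrightarrow> (\<exists>u. subseq u w \<and> order_iso u p)"
  unfolding contains_def subseq_conv_nths by auto

lemma pat_nth: "i < a + 1 + b \<Longrightarrow> pat a b x y ! i = (if i = a then y else x)"
  by (auto simp: pat_def nth_append)

lemma pat_length[simp]: "length (pat a b x y) = a + 1 + b"
  by (simp add: pat_def)

lemma map_pat: "map f (pat a b x y) = pat a b (f x) (f y)"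
  by (simp add: pat_def)

lemma order_iso_pat:
  assumes "a \<ge> 1"
  shows "order_iso u (pat a b (1::nat) 2) \<longleftrightarrow> (\<exists>x y. x < y \<and> u = pat a b x y)"
proof
  assume o: "order_iso u (pat a b (1::nat) 2)"
  then have len: "length u = a + 1 + b" by (simp add: order_iso_def)
  have oi: "\<And>i j. i < a + 1 + b \<Longrightarrow> j < a + 1 + b \<Longrightarrow>
      (u ! i < u ! j) = (pat a b (1::nat) 2 ! i < pat a b (1::nat) 2 ! j)"
    using o len unfolding order_iso_def by simp
  have lt: "u ! 0 < u ! a"
  proof -
    have "(u ! 0 < u ! a) = (pat a b (1::nat) 2 ! 0 < pat a b (1::nat) 2 ! a)" by (rule oi) auto
    moreover have "pat a b (1::nat) 2 ! 0 = 1" using assms by (simp add: pat_nth)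
    moreover have "pat a b (1::nat) 2 ! a = 2" by (simp add: pat_nth)
    ultimately show ?thesis by simp
  qed
  have eq: "u ! i = u ! 0" if "i < a + 1 + b" "i \<noteq> a" for i
  proof -
    have p0: "pat a b (1::nat) 2 ! 0 = 1" using assms by (simp add: pat_nth)
    have pi: "pat a b (1::nat) 2 ! i = 1" using that by (simp add: pat_nth)
    have "(u ! i < u ! 0) = (pat a b (1::nat) 2 ! i < pat a b (1::nat) 2 ! 0)" by (rule oi) (use that in auto)
    moreover have "(u ! 0 < u ! i) = (pat a b (1::nat) 2 ! 0 < pat a b (1::nat) 2 ! i)" by (rule oi) (use that in auto)
    ultimately show ?thesis using p0 pi by simp
  qed
  have "u = pat a b (u!0) (u!a)"
    by (rule nth_equalityI) (auto simp: len pat_nth eq)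
  then show "\<exists>x y. x < y \<and> u = pat a b x y" using lt by blast
next
  assume "\<exists>x y. x < y \<and> u = pat a b x y"
  then obtain x y where "x < y" "u = pat a b x y" by blast
  then show "order_iso u (pat a b (1::nat) 2)"
    unfolding order_iso_def by (auto simp: pat_nth)
qed

lemma order_iso_map:
  assumes "\<forall>x\<in>set u. \<forall>y\<in>set u. (x < y \<longleftrightarrow> f x < f y)"
  shows "order_iso (map f u) p \<longleftrightarrow> order_iso u p"
  using assms unfolding order_iso_def by (auto simp: nth_mem)

lemma order_iso_shift:
  assumes "\<forall>t\<in>set \<tau>. 1 \<le> t"
  shows "order_iso (x # u) (1 # map Suc \<tau>) \<longleftrightarrow> (\<forall>z\<in>set u. x < z) \<and> order_iso u \<tau>"
proof -
  have t: "\<forall>i<length \<tau>. 1 \<le> \<tau> ! i" using assms by (simp add: all_set_conv_all_nth)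
  show ?thesis
  proof
    assume o: "order_iso (x # u) (1 # map Suc \<tau>)"
    then have len: "length u = length \<tau>" by (simp add: order_iso_def)
    have oi: "\<And>i j. i < length (x#u) \<Longrightarrow> j < length (x#u) \<Longrightarrow>
       ((x#u)!i < (x#u)!j) = ((1 # map Suc \<tau>)!i < (1 # map Suc \<tau>)!j)"
      using o unfolding order_iso_def by blast
    have "\<forall>i<length u. x < u ! i"
    proof (intro allI impI)
      fix i assume "i < length u"
      have "((x#u) ! 0 < (x#u) ! Suc i) = ((1 # map Suc \<tau>) ! 0 < (1 # map Suc \<tau>) ! Suc i)"
        by (rule oi) (simp_all add: \<open>i < length u\<close>)
      moreover have "1 \<le> \<tau> ! i" using t len \<open>i < length u\<close> by simp
      ultimately show "x < u ! i" using len \<open>i < length u\<close> by simp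
    qed
    moreover have "order_iso u \<tau>"
    proof -
      have "\<forall>i<length u. \<forall>j<length u. (u ! i < u ! j \<longleftrightarrow> \<tau> ! i < \<tau> ! j)"
      proof (intro allI impI)
        fix i j assume "i < length u" "j < length u"
        then have "((x#u) ! Suc i < (x#u) ! Suc j \<longleftrightarrow> (1 # map Suc \<tau>) ! Suc i < (1 # map Suc \<tau>) ! Suc j)"
          by (intro oi) simp_all
        then show "(u ! i < u ! j \<longleftrightarrow> \<tau> ! i < \<tau> ! j)" using \<open>i < length u\<close> \<open>j < length u\<close> len by simp
      qed
      then show ?thesis using len by (simp add: order_iso_def)
    qed
    ultimately show "(\<forall>z\<in>set u. x < z) \<and> order_iso u \<tau>" by (simp add: all_set_conv_all_nth)
  next
    assume h: "(\<forall>z\<in>set u. x < z) \<and> order_iso u \<tau>"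
    then have len: "length u = length \<tau>" and xl: "\<forall>i<length u. x < u ! i"
      and o: "\<forall>i<length u. \<forall>j<length u. (u ! i < u ! j \<longleftrightarrow> \<tau> ! i < \<tau> ! j)"
      by (auto simp: order_iso_def all_set_conv_all_nth)
    show "order_iso (x # u) (1 # map Suc \<tau>)"
      unfolding order_iso_def
    proof (intro conjI allI impI)
      show "length (x # u) = length (1 # map Suc \<tau>)" using len by simp
    next
      fix i j assume i: "i < length (x # u)" and j: "j < length (x # u)"
      show "((x # u) ! i < (x # u) ! j) = ((1 # map Suc \<tau>) ! i < (1 # map Suc \<tau>) ! j)"
      proof (cases i; cases j)
        fix i' j' assume "i = Suc i'" "j = Suc j'"
        then show ?thesis using o i j len by auto
      next
        fix j' assume "i = 0" "j = Suc j'"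
        then show ?thesis using xl t i j len by auto
      next
        fix i' assume "i = Suc i'" "j = 0"
        then show ?thesis using xl t i j len by (auto simp: less_imp_not_less)
      qed auto
    qed
  qed
qed

lemma subseq_set: "subseq u w \<Longrightarrow> set u \<subseteq> set w"
  by (auto simp: subseq_conv_nths dest: set_nths_subset[THEN subsetD])

lemma contains_pat:
  assumes "a \<ge> 1"
  shows "contains w (pat a b 1 2) \<longleftrightarrow> (\<exists>x y. x < y \<and> subseq (pat a b x y) w)"
  unfolding contains_subseq order_iso_pat[OF assms] by blast

lemma pat_set: "a \<ge> 1 \<Longrightarrow> set (pat a b x y) = {x, y}"
  by (cases a) (auto simp: pat_def)

lemma contains_sigma:
  assumes a: "a \<ge> 1" and ge: "\<forall>x\<in>set w. 1 \<le> x"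
    and mk: "map (\<lambda>x. x = 1) w = M" and fl: "filter (\<lambda>x. x \<noteq> 1) w = map Suc v"
  shows "contains w (pat a b 1 2) \<longleftrightarrow> contains v (pat a b 1 2) \<or> subseq (pat a b True False) M"
proof
  assume "contains w (pat a b 1 2)"
  then obtain x y where xy: "x < y" and s: "subseq (pat a b x y) w"
    using contains_pat[OF a] by blast
  have "x \<in> set (pat a b x y)" using pat_set[OF a, of b x y] by simp
  then have "x \<in> set w" using subseq_set[OF s] by blast
  then have x1: "1 \<le> x" using ge by auto
  show "contains v (pat a b 1 2) \<or> subseq (pat a b True False) M"
  proof (cases "x = 1")
    case True
    have "subseq (map (\<lambda>x. x = 1) (pat a b x y)) M" using subseq_map[OF s, of "\<lambda>x. x = 1"] unfolding mk .
    moreover have "map (\<lambda>x. x = 1) (pat a b x y) = pat a b True False"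
      using True xy by (simp add: map_pat)
    ultimately show ?thesis by simp
  next
    case False
    have "filter (\<lambda>x. x \<noteq> 1) (pat a b x y) = pat a b x y"
      using False xy x1 pat_set[OF a, of b x y] by (intro filter_True) auto
    then have "subseq (pat a b x y) (map Suc v)" using subseq_filter[OF s, of "\<lambda>x. x \<noteq> 1"] fl by simp
    from subseq_map[OF this, of "\<lambda>z. z - 1"]
    have "subseq (pat a b (x - 1) (y - 1)) v" by (simp add: map_pat comp_def)
    moreover have "x - 1 < y - 1" using False xy x1 by simp
    ultimately show ?thesis using contains_pat[OF a] by blast
  qed
next
  assume "contains v (pat a b 1 2) \<or> subseq (pat a b True False) M"
  then show "contains w (pat a b 1 2)"
  proof
    assume "contains v (pat a b 1 2)"
    then obtain x y where xy: "x < y" and s: "subseq (pat a b x y) v"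
      using contains_pat[OF a] by blast
    have "subseq (pat a b (Suc x) (Suc y)) (map Suc v)" using subseq_map[OF s, of Suc] by (simp add: map_pat)
    then have "subseq (pat a b (Suc x) (Suc y)) w"
      using fl subseq_filter_left[of "\<lambda>x. x \<noteq> 1" w] subseq_order.trans by metis
    then show ?thesis using contains_pat[OF a] xy by blast
  next
    assume "subseq (pat a b True False) M"
    then obtain N where N: "pat a b True False = nths M N" by (auto simp: subseq_conv_nths)
    define u where "u = nths w N"
    have su: "subseq u w" unfolding u_def subseq_conv_nths by blast
    have mu: "map (\<lambda>x. x = 1) u = pat a b True False" unfolding N u_def mk[symmetric] nths_map ..
    then have lu: "length u = a + 1 + b" by (metis length_map pat_length)
    have ui: "(u ! i = 1) = (i \<noteq> a)" if "i < a + 1 + b" for i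
    proof -
      have "map (\<lambda>x. x = 1) u ! i = pat a b True False ! i" using mu by simp
      then show ?thesis using that lu by (simp add: pat_nth)
    qed
    have "u ! a \<in> set w" using subseq_set[OF su] lu by (auto intro: nth_mem)
    then have ua: "1 < u ! a" using ge ui[of a] by fastforce
    have "u = pat a b 1 (u ! a)"
      by (rule nth_equalityI) (use lu ui in \<open>auto simp: pat_nth\<close>)
    then show ?thesis using contains_pat[OF a] su ua by metis
  qed
qed

lemma contains_shift:
  assumes ge: "\<forall>x\<in>set W. 1 \<le> x" and fl: "filter (\<lambda>x. x \<noteq> 1) W = map Suc v"
    and tau: "\<forall>t\<in>set \<tau>. 1 \<le> t"
  shows "contains (1 # W) (1 # map Suc \<tau>) \<longleftrightarrow> contains v \<tau>"
proof
  assume "contains (1 # W) (1 # map Suc \<tau>)"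
  then obtain u where s: "subseq u (1 # W)" and o: "order_iso u (1 # map Suc \<tau>)"
    unfolding contains_subseq by blast
  have "length u = Suc (length \<tau>)" using o by (simp add: order_iso_def)
  then obtain x u' where u: "u = x # u'" by (cases u) auto
  have "order_iso (x # u') (1 # map Suc \<tau>)" using o u by simp
  then have xs: "\<forall>z\<in>set u'. x < z" and o': "order_iso u' \<tau>"
    using order_iso_shift[OF tau] by blast+
  have "x \<in> set (1 # W)" using subseq_set[OF s] u by auto
  then have x1: "1 \<le> x" using ge by auto
  have s': "subseq u' (1 # W)" using s unfolding u by (rule subseq_Cons')
  have "\<forall>z\<in>set u'. z \<noteq> 1" using xs x1 by fastforce
  then have "filter (\<lambda>x. x \<noteq> 1) u' = u'" by (rule filter_True)
  then have "subseq u' (map Suc v)" using subseq_filter[OF s', of "\<lambda>x. x \<noteq> 1"] fl by simp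
  from subseq_map[OF this, of "\<lambda>z. z - 1"]
  have s2: "subseq (map (\<lambda>z. z - 1) u') v" by (simp add: comp_def)
  have mono: "\<forall>p\<in>set u'. \<forall>q\<in>set u'. (p < q \<longleftrightarrow> p - 1 < q - 1)"
  proof (intro ballI)
    fix p q assume "p \<in> set u'" "q \<in> set u'"
    then have "x < p" "x < q" using xs by auto
    then show "(p < q \<longleftrightarrow> p - 1 < q - 1)" using x1 by linarith
  qed
  have "order_iso (map (\<lambda>z. z - 1) u') \<tau>"
    using o' order_iso_map[OF mono] by blast
  then show "contains v \<tau>" using s2 unfolding contains_subseq by blast
next
  assume "contains v \<tau>"
  then obtain u where s: "subseq u v" and o: "order_iso u \<tau>"
    unfolding contains_subseq by blast
  have vge: "\<forall>y\<in>set v. 1 \<le> y"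
  proof
    fix y assume "y \<in> set v"
    then have "Suc y \<in> set (filter (\<lambda>x. x \<noteq> 1) W)" using fl by simp
    then show "1 \<le> y" by auto
  qed
  have "subseq (map Suc u) (map Suc v)" by (rule subseq_map[OF s])
  then have "subseq (map Suc u) (filter (\<lambda>x. x \<noteq> 1) W)" using fl by simp
  then have "subseq (map Suc u) W"
    using subseq_filter_left[of "\<lambda>x. x \<noteq> 1" W] by (rule subseq_order.trans)
  then have s2: "subseq (1 # map Suc u) (1 # W)" by simp
  have "order_iso (map Suc u) \<tau>" using o order_iso_map[of u Suc \<tau>] by simp
  moreover have "\<forall>z\<in>set (map Suc u). 1 < z"
  proof -
    have "\<forall>z\<in>set u. 1 \<le> z" using subseq_set[OF s] vge by auto
    then show ?thesis by auto
  qed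
  ultimately have "order_iso (1 # map Suc u) (1 # map Suc \<tau>)"
    using order_iso_shift[OF tau] by blast
  then show "contains (1 # W) (1 # map Suc \<tau>)" using s2 unfolding contains_subseq by blast
qed

lemma filter_not_cnt: "length (filter Not m) + cnt m = length m"
  by (induction m) auto

lemma rgw_ge1: "rgw v \<Longrightarrow> \<forall>y\<in>set v. 1 \<le> y"
  unfolding rgw_def using rgw_aux_bounds by blast

lemma rgw_cons1: "\<forall>y\<in>set v. 1 \<le> y \<Longrightarrow> length v = length (filter Not m) \<Longrightarrow>
  rgw (1 # merge m v) = rgw v"
  unfolding rgw_def using merge_rgw[of v m 0] by simp

lemma finite_rgw: "finite {v. rgw v \<and> length v = j \<and> P v}"
proof -
  have "finite {v. set v \<subseteq> {0..j} \<and> length v = j}"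
    by (rule finite_lists_length_eq) simp
  moreover have "{v. rgw v \<and> length v = j \<and> P v} \<subseteq> {v. set v \<subseteq> {0..j} \<and> length v = j}"
    unfolding rgw_def using rgw_aux_bounds[of 0] by fastforce
  ultimately show ?thesis by (rule rev_finite_subset)
qed

lemma shift1_eq: "shift1 \<tau> = 1 # map Suc \<tau>" by (simp add: shift1_def)

context
  fixes a b n :: nat and T :: "nat list set"
  assumes a1: "a \<ge> 1" and n1: "n \<ge> 1" and Trgw: "\<forall>\<tau>\<in>T. rgw \<tau>"
begin

definition BB :: "nat \<Rightarrow> nat list set" where
  "BB j = {v. rgw v \<and> length v = j \<and> avoids v (pat a b 1 2) \<and> (\<forall>\<tau>\<in>T. avoids v \<tau>)}"

definition AA :: "nat list set" where
  "AA = {w. rgw w \<and> length w = n \<and> avoids w (pat a b 1 2) \<and> (\<forall>\<tau>\<in>shift1 ` T. avoids w \<tau>)}"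

definition MM :: "bool list set" where
  "MM = {m. length m = n - 1 \<and> \<not> subseq (pat (a - 1) b True False) m}"

lemma key:
  assumes V: "\<forall>y\<in>set v. 1 \<le> y" and len: "length v = length (filter Not m)"
  shows "1 # merge m v \<in> AA \<longleftrightarrow> m \<in> MM \<and> v \<in> BB (length (filter Not m))"
proof -
  let ?w = "1 # merge m v"
  have ge: "\<forall>x\<in>set ?w. 1 \<le> x" using merge_ge1[of m v] by auto
  have mk: "map (\<lambda>x. x = 1) ?w = True # m" using merge_mask[OF V len] by simp
  have fl: "filter (\<lambda>x. x \<noteq> 1) ?w = map Suc v" using merge_filter[OF V len] by simp
  have flW: "filter (\<lambda>x. x \<noteq> 1) (merge m v) = map Suc v" using merge_filter[OF V len] by simp
  have pa: "pat a b True False = True # pat (a - 1) b True False"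
    using a1 by (cases a) (auto simp: pat_def)
  have cs: "contains ?w (pat a b 1 2) \<longleftrightarrow> contains v (pat a b 1 2) \<or> subseq (pat (a - 1) b True False) m"
    using contains_sigma[OF a1 ge mk fl] pa by simp
  have ct: "contains ?w (shift1 \<tau>) \<longleftrightarrow> contains v \<tau>" if "\<tau> \<in> T" for \<tau>
  proof -
    have "\<forall>t\<in>set \<tau>. 1 \<le> t" using Trgw that rgw_ge1 by blast
    then show ?thesis unfolding shift1_eq using contains_shift[OF _ flW] merge_ge1[of m v] by blast
  qed
  have lw: "length ?w = n \<longleftrightarrow> length m = n - 1" using merge_length[OF len] n1 by auto
  have rg: "rgw ?w = rgw v" by (rule rgw_cons1[OF V len])
  show ?thesis
    unfolding AA_def MM_def BB_def avoids_def using cs ct lw rg len by auto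
qed

lemma bij: "bij_betw (\<lambda>(m, v). 1 # merge m v) (SIGMA m:MM. BB (length (filter Not m))) AA"
proof (rule bij_betwI')
  fix p q assume p: "p \<in> (SIGMA m:MM. BB (length (filter Not m)))" and q: "q \<in> (SIGMA m:MM. BB (length (filter Not m)))"
  obtain m v where pe: "p = (m, v)" by (cases p)
  obtain m' v' where qe: "q = (m', v')" by (cases q)
  have V: "\<forall>y\<in>set v. 1 \<le> y" "length v = length (filter Not m)"
    using p pe rgw_ge1 by (auto simp: BB_def)
  have V': "\<forall>y\<in>set v'. 1 \<le> y" "length v' = length (filter Not m')"
    using q qe rgw_ge1 by (auto simp: BB_def)
  show "((\<lambda>(m, v). 1 # merge m v) p = (\<lambda>(m, v). 1 # merge m v) q) = (p = q)"
  proof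
    assume "(\<lambda>(m, v). 1 # merge m v) p = (\<lambda>(m, v). 1 # merge m v) q"
    then have e: "merge m v = merge m' v'" using pe qe by simp
    have "m = m'" using merge_mask[OF V] merge_mask[OF V'] e by metis
    moreover have "map Suc v = map Suc v'" using merge_filter[OF V] merge_filter[OF V'] e by metis
    then have "v = v'" by simp
    ultimately show "p = q" using pe qe by simp
  qed simp
next
  fix p assume p: "p \<in> (SIGMA m:MM. BB (length (filter Not m)))"
  obtain m v where pe: "p = (m, v)" by (cases p)
  have V: "\<forall>y\<in>set v. 1 \<le> y" "length v = length (filter Not m)"
    using p pe rgw_ge1 by (auto simp: BB_def)
  show "(\<lambda>(m, v). 1 # merge m v) p \<in> AA" using key[OF V] p pe by simp
next
  fix w assume w: "w \<in> AA"
  then have rw: "rgw w" and lw: "length w = n" by (auto simp: AA_def)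
  then obtain x W where we: "w = x # W" using n1 by (cases w) auto
  have x1: "x = 1" using rw we by (simp add: rgw_def)
  have ge: "\<forall>y\<in>set W. 1 \<le> y" using rw we rgw_ge1 by auto
  define m where "m = map (\<lambda>x. x = 1) W"
  define v where "v = map (\<lambda>x. x - 1) (filter (\<lambda>x. x \<noteq> 1) W)"
  have mv: "merge m v = W" unfolding m_def v_def by (rule merge_inv[OF ge])
  have V: "\<forall>y\<in>set v. 1 \<le> y" using ge by (auto simp: v_def)
  have len: "length v = length (filter Not m)"
    unfolding v_def m_def by (simp add: filter_map comp_def)
  have "1 # merge m v \<in> AA" using w we x1 mv by simp
  then have "(m, v) \<in> (SIGMA m:MM. BB (length (filter Not m)))" using key[OF V len] by simp
  moreover have "w = (\<lambda>(m, v). 1 # merge m v) (m, v)" using we x1 mv by simp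
  ultimately show "\<exists>p\<in>(SIGMA m:MM. BB (length (filter Not m))). w = (\<lambda>(m, v). 1 # merge m v) p" by blast
qed

lemma card_AA: "int (card AA) = (\<Sum>j<n. Fm (a - 1) b (n - 1) j * int (card (BB (n - 1 - j))))"
proof -
  have fMM: "finite MM" unfolding MM_def using finite_bl by simp
  have fBB: "finite (BB j)" for j unfolding BB_def by (rule finite_rgw)
  have "card AA = card (SIGMA m:MM. BB (length (filter Not m)))" using bij_betw_same_card[OF bij] by simp
  also have "\<dots> = (\<Sum>m\<in>MM. card (BB (length (filter Not m))))"
    using fMM fBB by (simp add: card_SigmaI)
  also have "\<dots> = (\<Sum>m\<in>MM. card (BB (n - 1 - cnt m)))"
  proof (rule sum.cong)
    fix m assume "m \<in> MM"
    then have "length m = n - 1" by (simp add: MM_def)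
    then have "length (filter Not m) = n - 1 - cnt m" using filter_not_cnt[of m] by simp
    then show "card (BB (length (filter Not m))) = card (BB (n - 1 - cnt m))" by simp
  qed simp
  also have "\<dots> = (\<Sum>j\<in>{..<n}. \<Sum>m\<in>{m \<in> MM. cnt m = j}. card (BB (n - 1 - cnt m)))"
  proof (rule sum.group[symmetric, OF fMM])
    show "finite {..<n}" by simp
    show "cnt ` MM \<subseteq> {..<n}"
    proof
      fix j assume "j \<in> cnt ` MM"
      then obtain m where "m \<in> MM" "j = cnt m" by blast
      then have "j + length (filter Not m) = n - 1" using filter_not_cnt[of m] by (simp add: MM_def)
      then show "j \<in> {..<n}" using n1 by simp
    qed
  qed
  also have "\<dots> = (\<Sum>j<n. card (NS (a - 1) b (n - 1) j) * card (BB (n - 1 - j)))"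
  proof (rule sum.cong)
    fix j assume "j \<in> {..<n}"
    have e: "{m \<in> MM. cnt m = j} = NS (a - 1) b (n - 1) j" by (auto simp: MM_def NS_def)
    have "(\<Sum>m\<in>{m \<in> MM. cnt m = j}. card (BB (n - 1 - cnt m))) = (\<Sum>m\<in>{m \<in> MM. cnt m = j}. card (BB (n - 1 - j)))"
      by (rule sum.cong) auto
    then show "(\<Sum>m\<in>{m \<in> MM. cnt m = j}. card (BB (n - 1 - cnt m))) = card (NS (a - 1) b (n - 1) j) * card (BB (n - 1 - j))"
      by (simp add: e)
  qed simp
  finally have "int (card AA) = int (\<Sum>j<n. card (NS (a - 1) b (n - 1) j) * card (BB (n - 1 - j)))" by simp
  also have "\<dots> = (\<Sum>j<n. Fm (a - 1) b (n - 1) j * int (card (BB (n - 1 - j))))"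
    by (simp add: card_NS[symmetric])
  finally show ?thesis .
qed

end

theorem lemma4p6:
  fixes a b n :: nat and T :: "nat list set"
  assumes "a \<ge> 1" and "n \<ge> 1"
    and "\<forall>\<tau>\<in>T. rgw \<tau>"
  defines "\<sigma> \<equiv> replicate a 1 @ [2] @ replicate b 1"
    and "k \<equiv> int a + int b + 1"
  shows "fcount \<sigma> (shift1 ` T) (int n) =
     (\<Sum>i\<in>{1..k-2}. fcount \<sigma> T (int n - i) * gbinom (int n - 1) (i - 1))
   + (\<Sum>i\<in>{k-1..int n}. fcount \<sigma> T (int n - i) * gbinom (int n - i + k - 3) (k - 3))"
proof -
  note a1 = assms(1) and n1 = assms(2) and Tr = assms(3)
  have sig: "\<sigma> = pat a b 1 2" unfolding \<sigma>_def pat_def by simp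
  define K where "K = int a + int b"
  define fc where "fc i = fcount \<sigma> T (int n - i)" for i
  define H1 where "H1 i = fc i * gbinom (int n - 1) (i - 1)" for i
  define H2 where "H2 i = fc i * gbinom (int n - i + k - 3) (k - 3)" for i
  have fcB: "fc i = int (card (BB a b T (nat (int n - i))))" if "i \<le> int n" for i
    using that unfolding fc_def fcount_def sig by (simp add: BB_def[OF a1 n1 Tr])
  have fc0: "fc i = 0" if "i > int n" for i
    using that unfolding fc_def fcount_def by simp
  have LHS: "fcount \<sigma> (shift1 ` T) (int n) = int (card (AA a b n T))"
    unfolding fcount_def AA_def[OF a1 n1 Tr] sig by simp
  also have "\<dots> = (\<Sum>j<n. Fm (a - 1) b (n - 1) j * int (card (BB a b T (n - 1 - j))))"
    by (rule card_AA[OF a1 n1 Tr])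
  also have "\<dots> = (\<Sum>i\<in>{1..int n}. Fm (a - 1) b (n - 1) (nat (i - 1)) * int (card (BB a b T (n - 1 - nat (i - 1)))))"
    by (rule sum.reindex_bij_witness[of _ "\<lambda>i. nat (i - 1)" "\<lambda>j. int j + 1"]) auto
  also have "\<dots> = (\<Sum>i\<in>{1..int n}. if i < K then H1 i else H2 i)"
  proof (rule sum.cong)
    fix i assume i: "i \<in> {1..int n}"
    define j where "j = nat (i - 1)"
    have ij: "int j = i - 1" using i by (simp add: j_def)
    have jn: "n - 1 - j = nat (int n - i)" using i n1 by (simp add: j_def nat_diff_distrib)
    have f: "int (card (BB a b T (n - 1 - j))) = fc i" using fcB[of i] i jn by simp
    show "Fm (a - 1) b (n - 1) (nat (i - 1)) * int (card (BB a b T (n - 1 - nat (i - 1)))) =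
          (if i < K then H1 i else H2 i)"
    proof (cases "i < K")
      case True
      have jl: "j < a - 1 + b" using True ij a1 by (simp add: K_def)
      have i1: "1 \<le> i" "i \<le> int n" using i by auto
      have e1: "nat (int n - 1) = n - 1" "nat (i - 1) = j" using n1 i1 by (auto simp: j_def)
      have "gbinom (int n - 1) (i - 1) = int (nat (int n - 1) choose nat (i - 1))"
        using i1 n1 unfolding gbinom_def by simp
      then have "gbinom (int n - 1) (i - 1) = int ((n - 1) choose j)" unfolding e1 .
      then show ?thesis using True Fm_lt[OF jl, of "n - 1"] f
        by (simp add: H1_def j_def[symmetric])
    next
      case False
      have jl: "\<not> j < a - 1 + b" using False ij a1 by (simp add: K_def)
      have q1: "int (n - 1) - int j + int (a - 1) + int b - 1 = int n - i + k - 3"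
        using ij a1 n1 by (simp add: k_def of_nat_diff)
      have q2: "int (a - 1) + int b - 1 = k - 3" using a1 by (simp add: k_def of_nat_diff)
      have "Fm (a - 1) b (n - 1) j = gbinom (int n - i + k - 3) (k - 3)"
        using Fm_ge[OF jl, of "n - 1"] unfolding q1 q2 .
      then show ?thesis using False f
        by (simp add: H2_def j_def[symmetric])
    qed
  qed simp
  also have "\<dots> = (\<Sum>i\<in>{1..int n} \<inter> {i. i < K}. H1 i) + (\<Sum>i\<in>{1..int n} \<inter> - {i. i < K}. H2 i)"
    by (rule sum.If_cases) simp
  also have "(\<Sum>i\<in>{1..int n} \<inter> {i. i < K}. H1 i) = (\<Sum>i\<in>{1..k-2}. H1 i)"
  proof (rule sum.mono_neutral_left)
    show "finite {1..k-2}" by simp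
    show "{1..int n} \<inter> {i. i < K} \<subseteq> {1..k-2}" by (auto simp: K_def k_def)
    show "\<forall>i\<in>{1..k-2} - {1..int n} \<inter> {i. i < K}. H1 i = 0"
    proof
      fix i assume "i \<in> {1..k-2} - {1..int n} \<inter> {i. i < K}"
      then have "i > int n" by (auto simp: K_def k_def)
      then show "H1 i = 0" using fc0 by (simp add: H1_def)
    qed
  qed
  also have "{1..int n} \<inter> - {i. i < K} = {k-1..int n}"
    using a1 by (auto simp: K_def k_def)
  finally show ?thesis unfolding H1_def H2_def fc_def .
qed

end
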